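(* Let $R$ be a commutative ring, let $n$ be a power of $2$, and let $A,B\in R[x]$ be polynomials of degree $n-1$. For an integer $m\ge1$ write $\ell(m)=\lfloor\log_2 m\rfloor$. Then $$A(x)B(x)=\frac{1-x^n}{1-x}\bigl(A(x)\odot B(x)\bigr)-\sum_{m=1}^{n-1}\frac{1-x^{2^{\ell(m)}}}{(1-x)\,x^m}\,U_m(x)\,V_m(x),$$ where $$U_m(x)=\Bigl(\frac{(1-x^n)\,x^m}{1-x^{2^{\ell(m)+1}}}\Bigr)\odot\Bigl(\bigl(1-x^{2^{\ell(m)}}\bigr)A(x)\Bigr),\qquad V_m(x)=\Bigl(\frac{(1-x^n)\,x^m}{1-x^{2^{\ell(m)+1}}}\Bigr)\odot\Bigl(\bigl(1-x^{2^{\ell(m)}}\bigr)B(x)\Bigr).$$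
   Context: For formal power series (in particular polynomials) $P=\sum_i p_ix^i$ and $Q=\sum_i q_ix^i$, the termwise product is $P\odot Q=\sum_i p_iq_ix^i$. The quotients $\frac{1-x^n}{1-x}=1+x+\dots+x^{n-1}$, $\frac{1-x^n}{1-x^{2^{j}}}=\sum_{i=0}^{n/2^j-1}x^{i2^j}$ (for $2^j\le n$) and $\frac{1-x^{2^j}}{1-x}=1+x+\dots+x^{2^j-1}$ denote the corresponding polynomials; the division by $x^m$ is exact since $U_m$ and $V_m$ are divisible by $x^m$. *)

theory Defs
  imports "HOL-Computational_Algebra.Polynomial" "HOL-Library.Discrete_Functions"
begin

definition termwise :: "'a::comm_ring_1 poly \<Rightarrow> 'a poly \<Rightarrow> 'a poly" (infixl "\<odot>" 70)
  where "P \<odot> Q = Poly (map (\<lambda>i. coeff P i * coeff Q i) [0..<Suc (degree P)])"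

text \<open>(1 - x^n)/(1 - x) = 1 + x + ... + x^(n-1).\<close>
definition geom :: "nat \<Rightarrow> 'a::comm_ring_1 poly"
  where "geom n = (\<Sum>i<n. monom 1 i)"

text \<open>(1 - x^n)/(1 - x^(2^j)) = sum over i < n/2^j of x^(i*2^j).\<close>
definition geom_step :: "nat \<Rightarrow> nat \<Rightarrow> 'a::comm_ring_1 poly"
  where "geom_step n j = (\<Sum>i< n div 2^j. monom 1 (i * 2^j))"

text \<open>Exact division by x^m: drop the lowest m coefficients.\<close>
definition div_xpow :: "'a::comm_ring_1 poly \<Rightarrow> nat \<Rightarrow> 'a poly"
  where "div_xpow P m = poly_shift m P"

definition U_poly :: "nat \<Rightarrow> nat \<Rightarrow> 'a::comm_ring_1 poly \<Rightarrow> 'a poly"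
  where "U_poly n m A =
     (monom 1 m * geom_step n (floor_log m + 1)) \<odot> ((1 - monom 1 (2 ^ floor_log m)) * A)"

end

theory Submission
  imports Defs
begin

abbreviation X :: "'a::comm_ring_1 poly" where "X \<equiv> monom 1 1"
definition sg :: "'a::comm_ring_1 poly \<Rightarrow> 'a poly" where "sg p = pcompose p [:0,0,1:]"
definition evp :: "'a::comm_ring_1 poly \<Rightarrow> 'a poly" where
  "evp A = Abs_poly (\<lambda>i. coeff A (2*i))"
definition odp :: "'a::comm_ring_1 poly \<Rightarrow> 'a poly" where
  "odp A = Abs_poly (\<lambda>i. coeff A (2*i+1))"

lemma coeff_evp: "coeff (evp A) i = coeff A (2*i)"
  unfolding evp_def by (subst coeff_Abs_poly[of "degree A"]) (auto intro: coeff_eq_0)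
lemma coeff_odp: "coeff (odp A) i = coeff A (2*i+1)"
  unfolding odp_def by (subst coeff_Abs_poly[of "degree A"]) (auto intro: coeff_eq_0)

lemma coeff_X_mult: "coeff (X * p) t = (if t = 0 then 0 else coeff p (t - 1))"
  by (simp add: coeff_monom_mult)

lemma coeff_1X_mult: "coeff ((1 + X) * p) t = coeff p t + (if t = 0 then 0 else coeff p (t - 1))"
  by (simp add: distrib_right coeff_monom_mult)

lemma coeff_sg: "coeff (sg p) t = (if even t then coeff p (t div 2) else 0)"
  unfolding sg_def
proof (induction p arbitrary: t)
  case 0 then show ?case by simp
next
  case (pCons a p)
  show ?case
  proof (cases t)
    case 0 then show ?thesis by (simp add: pcompose_pCons)
  next
    case (Suc t1)
    show ?thesis
    proof (cases t1)
      case 0 then show ?thesis using Suc by (simp add: pcompose_pCons)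
    next
      case (Suc t2)
      then show ?thesis using \<open>t = Suc t1\<close> pCons.IH[of t2] by (simp add: pcompose_pCons)
    qed
  qed
qed

lemma sg_mult: "sg (p * q) = sg p * sg q" unfolding sg_def by (rule pcompose_mult)
lemma sg_add: "sg (p + q) = sg p + sg q" unfolding sg_def by (rule pcompose_add)
lemma sg_diff: "sg (p - q) = sg p - sg q" unfolding sg_def by (rule pcompose_diff)
lemma sg_sum: "sg (sum f S) = (\<Sum>i\<in>S. sg (f i))" unfolding sg_def by (rule pcompose_sum)
lemma sg_X: "sg X = X * X"
  by (rule poly_eqI) (auto simp: coeff_sg mult_monom coeff_monom elim!: evenE oddE)

lemma coeff_termwise: "coeff (P \<odot> Q) i = coeff P i * coeff Q i"
  unfolding termwise_def
  by (cases "i \<le> degree P") (auto simp: nth_default_def coeff_eq_0 simp del: upt_Suc)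

lemma coeff_geom: "coeff (geom n :: 'a::comm_ring_1 poly) t = (if t < n then 1 else 0)"
  unfolding geom_def by (simp add: coeff_sum coeff_monom)

lemma coeff_geom_step: "coeff (geom_step n j :: 'a::comm_ring_1 poly) t =
   (if 2^j dvd t \<and> t div 2^j < n div 2^j then 1 else 0)"
proof -
  have "(\<Sum>i<n div 2^j. coeff (monom (1::'a) (i * 2^j)) t) =
        (\<Sum>i<n div 2^j. if i = t div 2^j \<and> 2^j dvd t then 1 else 0)"
    by (rule sum.cong) (auto simp: coeff_monom)
  also have "\<dots> = (if 2^j dvd t \<and> t div 2^j < n div 2^j then 1 else 0)"
    by (auto simp: sum.delta)
  finally show ?thesis unfolding geom_step_def by (simp add: coeff_sum)
qed

lemma coeff_1mA: fixes A :: "'a::comm_ring_1 poly" shows "coeff ((1 - monom 1 s) * A) t = coeff A t - (if t < s then 0 else coeff A (t - s))"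
  unfolding left_diff_distrib coeff_diff by (simp add: coeff_monom_mult)

lemma coeff_U:
  assumes "m \<ge> 1"
  shows "coeff (U_poly n m A) t =
    (if m \<le> t \<and> 2*2^floor_log m dvd (t-m) \<and> (t-m) div (2*2^floor_log m) < n div (2*2^floor_log m)
     then coeff A t - coeff A (t - 2^floor_log m) else 0)"
proof -
  have s: "2^floor_log m \<le> m" using floor_log_exp2_le[of m] assms by simp
  show ?thesis
    unfolding U_poly_def coeff_termwise coeff_1mA coeff_monom_mult coeff_geom_step
    using s by auto
qed

lemma U_even:
  assumes "m \<ge> 1"
  shows "U_poly (2*h) (2*m) A = sg (U_poly h m (evp A))"
proof (rule poly_eqI)
  fix t
  define s where "s = (2::nat)^floor_log m"
  have s: "s \<le> m" "s \<ge> 1" using floor_log_exp2_le[of m] assms by (simp_all add: s_def)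
  have fl: "floor_log (2*m) = Suc (floor_log m)" using assms by simp
  have m2: "2*m \<ge> 1" using assms by simp
  show "coeff (U_poly (2*h) (2*m) A) t = coeff (sg (U_poly h m (evp A))) t"
  proof (cases "even t")
    case True
    then obtain u where u: "t = 2*u" by blast
    have e1: "2*u - 2*m = 2*(u-m)" "2*u - 2*s = 2*(u-s)" by auto
    have e2: "2 * (2 * s) dvd 2*(u-m) \<longleftrightarrow> 2*s dvd (u-m)" by simp
    have e3: "2*(u-m) div (2*(2*s)) = (u-m) div (2*s)" by simp
    have e4: "2*h div (2*(2*s)) = h div (2*s)" by simp
    show ?thesis
      unfolding coeff_sg coeff_U[OF assms] coeff_U[OF m2] using assms
      by (simp add: fl u e1 e2 e3 e4 coeff_evp flip: s_def)
  next
    case False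
    have "\<not> (2*(2*s) dvd (t - 2*m))" if "2*m \<le> t"
    proof
      assume "2*(2*s) dvd (t - 2*m)"
      then have "2 dvd (t - 2*m)" by (metis dvd_triv_left dvd_trans)
      then have "even t" using that
        by (metis dvd_add dvd_triv_left le_add_diff_inverse2)
      then show False using False by simp
    qed
    then show ?thesis
      unfolding coeff_sg coeff_U[OF assms] coeff_U[OF m2] using assms False
      by (auto simp add: fl simp flip: s_def)
  qed
qed

lemma U_odd:
  assumes "m \<ge> 1"
  shows "U_poly (2*h) (2*m+1) A = X * sg (U_poly h m (odp A))"
proof (rule poly_eqI)
  fix t
  define s where "s = (2::nat)^floor_log m"
  have s: "s \<le> m" "s \<ge> 1" using floor_log_exp2_le[of m] assms by (simp_all add: s_def)
  have fl: "floor_log (2*m+1) = Suc (floor_log m)" using assms floor_log_rec[of "2*m+1"] by simp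
  have fl': "floor_log (Suc (2*m)) = Suc (floor_log m)" using fl by simp
  have m2: "2*m+1 \<ge> 1" using assms by simp
  show "coeff (U_poly (2*h) (2*m+1) A) t = coeff (X * sg (U_poly h m (odp A))) t"
  proof (cases "even t")
    case False
    then obtain u where u: "t = 2*u+1" by (metis oddE)
    have p: "(2::nat)^floor_log (2*m+1) = 2*s" unfolding fl s_def by simp
    have d: "t - (2*m+1) = 2*(u-m)" by (simp add: u)
    have cond: "(2*m+1 \<le> t \<and> 2*2^floor_log (2*m+1) dvd (t-(2*m+1)) \<and>
        (t-(2*m+1)) div (2*2^floor_log (2*m+1)) < 2*h div (2*2^floor_log (2*m+1)))
      \<longleftrightarrow> (m \<le> u \<and> 2*s dvd (u-m) \<and> (u-m) div (2*s) < h div (2*s))"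
    proof -
      have c1: "2*m+1 \<le> t \<longleftrightarrow> m \<le> u" by (simp add: u)
      have e2: "2 * (2 * s) dvd 2*(u-m) \<longleftrightarrow> 2*s dvd (u-m)" by simp
      have e3: "2*(u-m) div (2*(2*s)) = (u-m) div (2*s)" by simp
      have e4: "2*h div (2*(2*s)) = h div (2*s)" by simp
      show ?thesis unfolding p d by (simp only: c1 e2 e3 e4)
    qed
    have val: "coeff A t - coeff A (t - 2^floor_log (2*m+1)) = coeff (odp A) u - coeff (odp A) (u - s)"
      if "m \<le> u"
    proof -
      have "t - 2^floor_log (2*m+1) = 2*(u-s)+1" using that s unfolding p u by simp
      then show ?thesis by (simp add: coeff_odp u)
    qed
    have "coeff (U_poly (2*h) (2*m+1) A) t = (if m \<le> u \<and> 2*s dvd (u-m) \<and> (u-m) div (2*s) < h div (2*s)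
       then coeff (odp A) u - coeff (odp A) (u - s) else 0)"
      unfolding coeff_U[OF m2] cond using val by auto
    moreover have "coeff (X * sg (U_poly h m (odp A))) t = (if m \<le> u \<and> 2*s dvd (u-m) \<and> (u-m) div (2*s) < h div (2*s)
       then coeff (odp A) u - coeff (odp A) (u - s) else 0)"
      unfolding coeff_X_mult coeff_sg coeff_U[OF assms] by (simp add: u s_def)
    ultimately show ?thesis by simp
  next
    case True
    have "\<not> (2*(2*s) dvd (t - (2*m+1)))" if "2*m+1 \<le> t"
    proof
      assume "2*(2*s) dvd (t - (2*m+1))"
      then have "2 dvd (t - (2*m+1))" by (metis dvd_triv_left dvd_trans)
      then obtain c where c: "t - (2*m+1) = 2*c" by blast
      then have "t = 2*(c+m) + 1" using that by simp
      then have "odd t" by simp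
      then show False using True by simp
    qed
    moreover have "odd (t - 1)" if "t \<noteq> 0" using True that by simp
    ultimately show ?thesis
      unfolding coeff_X_mult coeff_sg coeff_U[OF assms] coeff_U[OF m2] using assms True
      by (auto simp add: fl fl' simp flip: s_def)
  qed
qed

lemma U_one:
  fixes A :: "'a::comm_ring_1 poly"
  assumes "degree A < 2*h"
  shows "U_poly (2*h) 1 A = X * sg (odp A - evp A)"
proof (rule poly_eqI)
  fix t
  have c: "coeff (U_poly (2*h) 1 A) t = (if 1 \<le> t \<and> 2 dvd (t-1) \<and> (t-1) div 2 < h then coeff A t - coeff A (t-1) else 0)"
    using coeff_U[of 1 "2*h" A t] by simp
  show "coeff (U_poly (2*h) 1 A) t = coeff (X * sg (odp A - evp A)) t"
  proof (cases "even t")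
    case False
    then obtain u where u: "t = 2*u+1" by (metis oddE)
    have "coeff A (2*u+1) = 0" "coeff A (2*u) = 0" if "\<not> u < h"
      using that assms by (auto intro!: coeff_eq_0)
    then show ?thesis
      unfolding coeff_X_mult coeff_sg c using assms
      by (auto simp add: u coeff_odp coeff_evp)
  next
    case True
    moreover have "odd (t - 1)" if "t \<noteq> 0" using True that by simp
    ultimately show ?thesis
      unfolding coeff_X_mult coeff_sg c
      by auto
  qed
qed

lemma geom_double: "geom (2*h) = (1 + X) * sg (geom h :: 'a::comm_ring_1 poly)"
proof (rule poly_eqI)
  fix t
  show "coeff (geom (2*h)) t = coeff ((1 + X) * sg (geom h :: 'a poly)) t"
    unfolding coeff_1X_mult coeff_sg coeff_geom
    by (cases "even t") (auto elim!: evenE oddE)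
qed

definition T :: "nat \<Rightarrow> nat \<Rightarrow> 'a::comm_ring_1 poly \<Rightarrow> 'a poly \<Rightarrow> 'a poly" where
  "T n m A B = div_xpow (geom (2 ^ floor_log m) * U_poly n m A * U_poly n m B) m"

lemma shift_even:
  fixes Q :: "'a::comm_ring_1 poly"
  assumes "m \<ge> 1"
  shows "poly_shift (2*m) ((1 + X) * sg Q) = (1 + X) * sg (poly_shift m Q)"
proof (rule poly_eqI)
  fix t
  show "coeff (poly_shift (2*m) ((1 + X) * sg Q)) t = coeff ((1 + X) * sg (poly_shift m Q)) t"
    unfolding coeff_poly_shift coeff_1X_mult coeff_sg using assms
    by (cases "even t") (auto elim!: evenE oddE simp: algebra_simps)
qed

lemma shift_odd:
  fixes Q :: "'a::comm_ring_1 poly"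
  assumes "m \<ge> 1" "\<And>i. i < m \<Longrightarrow> coeff Q i = 0"
  shows "poly_shift (2*m+1) ((1 + X) * (X * (X * sg Q))) = (1 + X) * (X * sg (poly_shift m Q))"
proof (rule poly_eqI)
  fix t
  have q: "coeff Q (m - 1) = 0" using assms by simp
  show "coeff (poly_shift (2*m+1) ((1 + X) * (X * (X * sg Q)))) t = coeff ((1 + X) * (X * sg (poly_shift m Q))) t"
  proof -
    consider "t = 0" | u where "t = 2*u+1" | u where "t = 2*u+2"
    proof -
      have "t = 0 \<or> (\<exists>u. t = 2*u+1) \<or> (\<exists>u. t = 2*u+2)" by presburger
      then show ?thesis using that by blast
    qed
    then show ?thesis
    proof cases
      case 1
      have h1: "(m*2 - Suc (Suc 0)) div 2 = m - Suc 0" "(2*m - Suc (Suc 0)) div 2 = m - Suc 0" by presburger+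
      show ?thesis using 1 assms(1) q unfolding coeff_poly_shift coeff_1X_mult coeff_X_mult coeff_sg by (simp add: h1)
    next
      case 2 then show ?thesis using assms(1) unfolding coeff_poly_shift coeff_1X_mult coeff_X_mult coeff_sg by (simp add: algebra_simps)
    next
      case 3
      show ?thesis using 3 assms(1) unfolding coeff_poly_shift coeff_1X_mult coeff_X_mult coeff_sg by (simp add: algebra_simps)
    qed
  qed
qed

lemma shift_one: "poly_shift 1 (X * (X * R)) = X * (R :: 'a::comm_ring_1 poly)"
  by (rule poly_eqI) (unfold coeff_poly_shift coeff_X_mult, simp)

lemma low_mult:
  fixes P R :: "'a::comm_ring_1 poly"
  assumes "\<And>i. i < m \<Longrightarrow> coeff P i = 0" "i < m"
  shows "coeff (R * P) i = 0"
  unfolding coeff_mult using assms by (intro sum.neutral) auto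

lemma U_low: "m \<ge> 1 \<Longrightarrow> i < m \<Longrightarrow> coeff (U_poly n m A) i = 0"
  by (simp add: coeff_U)

lemma geom_one: "geom 1 = 1"
  by (simp add: geom_def)
lemma geom_Suc0: "geom (Suc 0) = 1"
  by (simp add: geom_def)

lemma T_even:
  fixes A B :: "'a::comm_ring_1 poly"
  assumes "m \<ge> 1"
  shows "T (2*h) (2*m) A B = (1 + X) * sg (T h m (evp A) (evp B))"
proof -
  have g: "geom (2 ^ floor_log (2*m)) = (1 + X) * sg (geom (2 ^ floor_log m) :: 'a poly)"
    using assms geom_double[of "2 ^ floor_log m"] by simp
  have "geom (2 ^ floor_log (2*m)) * U_poly (2*h) (2*m) A * U_poly (2*h) (2*m) B
     = (1 + X) * sg (geom (2 ^ floor_log m) * U_poly h m (evp A) * U_poly h m (evp B))"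
    unfolding g U_even[OF assms] sg_mult by (simp add: mult.assoc)
  then show ?thesis unfolding T_def div_xpow_def using shift_even[OF assms] by simp
qed

lemma T_odd:
  fixes A B :: "'a::comm_ring_1 poly"
  assumes "m \<ge> 1"
  shows "T (2*h) (2*m+1) A B = (1 + X) * (X * sg (T h m (odp A) (odp B)))"
proof -
  have g: "geom (2 ^ floor_log (2*m+1)) = (1 + X) * sg (geom (2 ^ floor_log m) :: 'a poly)"
    using assms geom_double[of "2 ^ floor_log m"] floor_log_rec[of "2*m+1"] by simp
  define Q where "Q = geom (2 ^ floor_log m) * U_poly h m (odp A) * U_poly h m (odp B)"
  have "geom (2 ^ floor_log (2*m+1)) * U_poly (2*h) (2*m+1) A * U_poly (2*h) (2*m+1) B
     = (1 + X) * (X * (X * sg Q))"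
    unfolding g U_odd[OF assms] Q_def sg_mult by (simp add: algebra_simps)
  note eq = this
  have Qlow: "coeff Q i = 0" if "i < m" for i
    unfolding Q_def using low_mult[OF U_low[OF assms] that] by blast
  have "T (2*h) (2*m+1) A B = (1 + X) * (X * sg (poly_shift m Q))"
    unfolding T_def div_xpow_def eq by (rule shift_odd[OF assms Qlow])
  then show ?thesis by (simp only: T_def div_xpow_def Q_def)
qed

lemma T_one:
  fixes A B :: "'a::comm_ring_1 poly"
  assumes "degree A < 2*h" "degree B < 2*h"
  shows "T (2*h) 1 A B = X * sg ((odp A - evp A) * (odp B - evp B))"
proof -
  have "geom 1 * (X * sg (odp A - evp A)) * (X * sg (odp B - evp B)) = X * (X * sg ((odp A - evp A) * (odp B - evp B)))"
    unfolding geom_one sg_mult by (simp add: mult_ac)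
  then show ?thesis
    unfolding T_def div_xpow_def floor_log_one power_0 U_one[OF assms(1)] U_one[OF assms(2)]
    by (simp only: shift_one)
qed

lemma decomp: "A = sg (evp A) + X * sg (odp A)"
proof (rule poly_eqI)
  fix t
  show "coeff A t = coeff (sg (evp A) + X * sg (odp A)) t"
    unfolding coeff_add coeff_X_mult coeff_sg coeff_evp coeff_odp
    by (cases "even t") (auto elim!: evenE oddE)
qed

lemma termwise_decomp: "A \<odot> B = sg (evp A \<odot> evp B) + X * sg (odp A \<odot> odp B)"
proof (rule poly_eqI)
  fix t
  show "coeff (A \<odot> B) t = coeff (sg (evp A \<odot> evp B) + X * sg (odp A \<odot> odp B)) t"
    unfolding coeff_add coeff_X_mult coeff_sg coeff_evp coeff_odp coeff_termwise
    by (cases "even t") (auto elim!: evenE oddE)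
qed

lemma deg_evp: "degree A < 2*h \<Longrightarrow> degree (evp A) < h"
proof -
  assume a: "degree A < 2*h"
  then have "h \<ge> 1" by simp
  have "degree (evp A) \<le> h - 1"
    by (rule degree_le) (use a in \<open>auto simp: coeff_evp intro!: coeff_eq_0\<close>)
  then show ?thesis using \<open>h \<ge> 1\<close> by simp
qed

lemma deg_odp: "degree A < 2*h \<Longrightarrow> degree (odp A) < h"
proof -
  assume a: "degree A < 2*h"
  then have "h \<ge> 1" by simp
  have "degree (odp A) \<le> h - 1"
    by (rule degree_le) (use a in \<open>auto simp: coeff_odp intro!: coeff_eq_0\<close>)
  then show ?thesis using \<open>h \<ge> 1\<close> by simp
qed

lemma sum_split:
  fixes f :: "nat \<Rightarrow> 'b::comm_monoid_add"
  assumes "h \<ge> 1"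
  shows "(\<Sum>m = 1..2*h - 1. f m) = f 1 + (\<Sum>m = 1..h - 1. f (2*m) + f (2*m+1))"
  using assms
proof (induction h rule: dec_induct)
  case base then show ?case by simp
next
  case (step h)
  have "{1..2*Suc h - 1} = {1..2*h-1} \<union> {2*h, 2*h+1}" using step by auto
  moreover have "{1..Suc h - 1} = {1..h-1} \<union> {h}" using step by auto
  ultimately show ?case using step by (simp add: add_ac)
qed

lemma ring_id:
  fixes e e' v v' g p q x :: "'a::comm_ring_1"
  shows "(e + x*v)*(e' + x*v') = ((1+x)*g)*(p + x*q)
     - (x*((v-e)*(v'-e')) + ((1+x)*(g*p - e*e') + (1+x)*x*(g*q - v*v')))"
  by (simp add: algebra_simps)

lemma main_gen:
  fixes A B :: "'a::comm_ring_1 poly"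
  shows "degree A < 2^k \<Longrightarrow> degree B < 2^k \<Longrightarrow>
     A * B = geom (2^k) * (A \<odot> B) - (\<Sum>m = 1..2^k - 1. T (2^k) m A B)"
proof (induction k arbitrary: A B)
  case 0
  then have "degree A = 0" "degree B = 0" by auto
  then obtain a b where ab: "A = [:a:]" "B = [:b:]" by (metis degree_0_id)
  have "A * B = A \<odot> B"
  proof (rule poly_eqI)
    fix t show "coeff (A * B) t = coeff (A \<odot> B) t"
      unfolding coeff_termwise ab by (cases t) simp_all
  qed
  then show ?case by (simp add: geom_Suc0)
next
  case (Suc k)
  define h :: nat where "h = 2^k"
  have h1: "h \<ge> 1" by (simp add: h_def)
  have n: "(2::nat)^Suc k = 2*h" by (simp add: h_def)
  have dA: "degree A < 2*h" and dB: "degree B < 2*h" using Suc.prems n by auto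
  define EA where "EA = evp A"
  define OA where "OA = odp A"
  define EB where "EB = evp B"
  define OB where "OB = odp B"
  have IHE: "(\<Sum>m = 1..h - 1. T h m EA EB) = geom h * (EA \<odot> EB) - EA * EB"
    using Suc.IH[of EA EB] deg_evp[OF dA] deg_evp[OF dB] by (simp add: EA_def EB_def h_def)
  have IHO: "(\<Sum>m = 1..h - 1. T h m OA OB) = geom h * (OA \<odot> OB) - OA * OB"
    using Suc.IH[of OA OB] deg_odp[OF dA] deg_odp[OF dB] by (simp add: OA_def OB_def h_def)
  have "(\<Sum>m = 1..2*h - 1. T (2*h) m A B)
      = T (2*h) 1 A B + (\<Sum>m = 1..h - 1. T (2*h) (2*m) A B + T (2*h) (2*m+1) A B)"
    by (rule sum_split[OF h1])
  also have "\<dots> = X * sg ((OA - EA) * (OB - EB))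
      + (\<Sum>m = 1..h - 1. (1 + X) * sg (T h m EA EB) + (1 + X) * (X * sg (T h m OA OB)))"
    using T_one[OF dA dB] T_even T_odd unfolding EA_def EB_def OA_def OB_def
    by (intro arg_cong2[where f="(+)"] sum.cong) auto
  also have "\<dots> = X * ((sg OA - sg EA) * (sg OB - sg EB))
      + ((1 + X) * (sg (geom h) * sg (EA \<odot> EB) - sg EA * sg EB)
      + (1 + X) * X * (sg (geom h) * sg (OA \<odot> OB) - sg OA * sg OB))"
    unfolding sum.distrib sum_distrib_left[symmetric] sg_sum[symmetric] IHE IHO
    by (simp add: sg_mult sg_diff mult.assoc)
  finally have S: "(\<Sum>m = 1..2*h - 1. T (2*h) m A B) = \<dots>" .
  have "A * B = (sg EA + X * sg OA) * (sg EB + X * sg OB)"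
    using decomp[of A] decomp[of B] by (simp add: EA_def EB_def OA_def OB_def)
  also have "\<dots> = ((1 + X) * sg (geom h)) * (sg (EA \<odot> EB) + X * sg (OA \<odot> OB))
      - (\<Sum>m = 1..2*h - 1. T (2*h) m A B)"
    unfolding S by (rule ring_id)
  also have "\<dots> = geom (2*h) * (A \<odot> B) - (\<Sum>m = 1..2*h - 1. T (2*h) m A B)"
    unfolding geom_double termwise_decomp[of A B] EA_def EB_def OA_def OB_def ..
  finally show ?case unfolding n .
qed

theorem mainTheorem2:
  fixes A B :: "'a::comm_ring_1 poly" and n k :: nat
  assumes "n = 2 ^ k"
    and "degree A = n - 1" and "degree B = n - 1"
  shows "A * B = geom n * (A \<odot> B)
    - (\<Sum>m = 1..n - 1. div_xpow (geom (2 ^ floor_log m) * U_poly n m A * U_poly n m B) m)"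
proof -
  have pos: "n \<ge> 1" using assms(1) by simp
  have "degree A < 2^k" "degree B < 2^k" using assms pos by auto
  from main_gen[OF this] show ?thesis unfolding T_def assms(1) .
qed

end
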